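(* Let $l,u,\hbar$ satisfy the standing assumptions below. (i) If $S\in C^1_G(0,T)$, then the mappings $t\mapsto L_t(S_t)$ and $t\mapsto U_t(S_t)$ are continuous. In particular, $t\mapsto L_t(0)$ and $t\mapsto U_t(0)$ are continuous and bounded. (ii) If $t\in[0,T]$ and $X,X'\in L^1_G(\Omega_t)$, then $|L_t(X)-L_t(X')|\le\frac{2\overline{c}}{\underline{c}}\hat{\mathbb{E}}[|X-X'|]$ and $|U_t(X)-U_t(X')|\le\frac{2\overline{c}}{\underline{c}}\hat{\mathbb{E}}[|X-X'|]$.
   Context: Setting: $\hat{\mathbb{E}}$ is the $G$-expectation on $\Omega_T=\{\omega\in C([0,T];\mathbb{R}^d):\omega_0=0\}$; $L^1_G(\Omega_t)$ the completion of bounded Lipschitz cylinder functionals of the canonical process up to time $t$ under $\hat{\mathbb{E}}|\cdot|$; $C^1_G(0,T)$ the set of processes $S$ with $S_v\in L^1_G(\Omega_v)$ for all $v$ and $v\mapsto S_v$ continuous in $\hat{\mathbb{E}}|\cdot|$. Standing assumptions: $l,u:[0,T]\to\mathbb{R}$ bounded continuous with $\inf_t(u_t-l_t)>0$; $\hbar:[0,T]\times\Omega_T\times\mathbb{R}\to\mathbb{R}$ with $(t,y)\mapsto\hbar(t,y)$ uniformly continuous uniformly in $\omega$, $y\mapsto\hbar(t,y)$ strictly increasing, $\hbar(t,y)\in L^1_G(\Omega_T)$, $\hat{\mathbb{E}}[\lim_{y\downarrow-\infty}\hbar(t,y)]<\inf_sl_s<\sup_su_s<\hat{\mathbb{E}}[\lim_{y\uparrow\infty}\hbar(t,y)]$,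 $|\hbar(t,y)|\le C_\hbar(1+|y|)$, and $\underline{c}|y-y'|\le|\hbar(t,y)-\hbar(t,y')|\le\overline{c}|y-y'|$ with constants $C_\hbar>0$, $0<\underline{c}\le\overline{c}$. For $X\in L^1_G(\Omega_t)$, $\overline{H}(t,x,X):=\hat{\mathbb{E}}[\hbar(t,x+X-\hat{\mathbb{E}}[X])]$, $x\in\mathbb{R}$ (continuous, strictly increasing, with limits $\mp\infty$ at $\mp\infty$); $L_t(X):=\overline{H}^{-1}(t,\cdot,X)(l_t)$ and $U_t(X):=\overline{H}^{-1}(t,\cdot,X)(u_t)$. *)

theory Defs
  imports "HOL-Analysis.Analysis"
begin

text \<open>E plays the role of the G-expectation, LG t the role of L^1_G(Omega_t),
  random variables are functions 'w => real (the sample space Omega_T is the abstract type 'w).\<close>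

definition G_framework :: "(('w \<Rightarrow> real) \<Rightarrow> real) \<Rightarrow> (real \<Rightarrow> ('w \<Rightarrow> real) set) \<Rightarrow> real \<Rightarrow> bool" where
  "G_framework E LG T \<longleftrightarrow>
     (\<forall>t\<in>{0..T}. (\<forall>c. (\<lambda>_. c) \<in> LG t)
        \<and> (\<forall>X\<in>LG t. \<forall>Y\<in>LG t. (\<lambda>w. X w + Y w) \<in> LG t)
        \<and> (\<forall>X\<in>LG t. \<forall>a. (\<lambda>w. a * X w) \<in> LG t)
        \<and> (\<forall>X\<in>LG t. (\<lambda>w. \<bar>X w\<bar>) \<in> LG t))
   \<and> (\<forall>s t. 0 \<le> s \<and> s \<le> t \<and> t \<le> T \<longrightarrow> LG s \<subseteq> LG t)
   \<and> (\<forall>X\<in>LG T. \<forall>Y\<in>LG T. (\<forall>w. X w \<le> Y w) \<longrightarrow> E X \<le> E Y)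
   \<and> (\<forall>c. E (\<lambda>_. c) = c)
   \<and> (\<forall>X\<in>LG T. \<forall>Y\<in>LG T. E (\<lambda>w. X w + Y w) \<le> E X + E Y)
   \<and> (\<forall>X\<in>LG T. \<forall>a\<ge>0. E (\<lambda>w. a * X w) = a * E X)
   \<and> (\<forall>f :: 'w \<Rightarrow> real \<Rightarrow> real. \<forall>Y\<in>LG T.
        (\<forall>y. (\<lambda>w. f w y) \<in> LG T) \<and> (\<exists>K. \<forall>w y y'. \<bar>f w y - f w y'\<bar> \<le> K * \<bar>y - y'\<bar>)
        \<longrightarrow> (\<lambda>w. f w (Y w)) \<in> LG T)"

definition CG1 :: "(('w \<Rightarrow> real) \<Rightarrow> real) \<Rightarrow> (real \<Rightarrow> ('w \<Rightarrow> real) set) \<Rightarrow> real \<Rightarrow> (real \<Rightarrow> 'w \<Rightarrow> real) set" where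
  "CG1 E LG T = {S. (\<forall>v\<in>{0..T}. S v \<in> LG v) \<and>
      (\<forall>v\<in>{0..T}. ((\<lambda>v'. E (\<lambda>w. \<bar>S v' w - S v w\<bar>)) \<longlongrightarrow> 0) (at v within {0..T}))}"

text \<open>\<open>Hbar E hb t x X\<close> is \<open>\<hat>E[hbar(t, x + X - \<hat>E[X])]\<close>; hb t y w = hbar(t,w,y).\<close>
definition Hbar :: "(('w \<Rightarrow> real) \<Rightarrow> real) \<Rightarrow> (real \<Rightarrow> real \<Rightarrow> 'w \<Rightarrow> real) \<Rightarrow> real \<Rightarrow> real \<Rightarrow> ('w \<Rightarrow> real) \<Rightarrow> real" where
  "Hbar E hb t x X = E (\<lambda>w. hb t (x + X w - E X) w)"

text \<open>\<open>Hinv E hb t X a\<close> = \<open>Hbar^{-1}(t,.,X)(a)\<close>; so L_t(X) = Hinv .. t X (l t), U_t(X) = Hinv .. t X (u t).\<close>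
definition Hinv :: "(('w \<Rightarrow> real) \<Rightarrow> real) \<Rightarrow> (real \<Rightarrow> real \<Rightarrow> 'w \<Rightarrow> real) \<Rightarrow> real \<Rightarrow> ('w \<Rightarrow> real) \<Rightarrow> real \<Rightarrow> real" where
  "Hinv E hb t X a = (THE x. Hbar E hb t x X = a)"

end

theory Submission imports Defs begin

locale GS =
  fixes E :: "('w \<Rightarrow> real) \<Rightarrow> real"
    and LG :: "real \<Rightarrow> ('w \<Rightarrow> real) set"
    and T :: real
    and hb :: "real \<Rightarrow> real \<Rightarrow> 'w \<Rightarrow> real"
    and c_lo c_hi :: real
  assumes G: "G_framework E LG T" and T0: "0 \<le> T"
    and c_pos: "0 < c_lo" "c_lo \<le> c_hi"
    and h_mono: "\<forall>t\<in>{0..T}. \<forall>w. strict_mono (\<lambda>y. hb t y w)"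
    and h_LG: "\<forall>t\<in>{0..T}. \<forall>y. hb t y \<in> LG T"
    and h_bilip: "\<forall>t\<in>{0..T}. \<forall>y y' w. c_lo * \<bar>y - y'\<bar> \<le> \<bar>hb t y w - hb t y' w\<bar>
                    \<and> \<bar>hb t y w - hb t y' w\<bar> \<le> c_hi * \<bar>y - y'\<bar>"
begin

lemma TT: "T \<in> {0..T}" using T0 by simp

lemmas GA = G[unfolded G_framework_def, THEN conjunct1]
lemmas GB = G[unfolded G_framework_def, THEN conjunct2, THEN conjunct1]
lemmas GC = G[unfolded G_framework_def, THEN conjunct2, THEN conjunct2, THEN conjunct1]
lemmas GD = G[unfolded G_framework_def, THEN conjunct2, THEN conjunct2, THEN conjunct2, THEN conjunct1]
lemmas GE = G[unfolded G_framework_def, THEN conjunct2, THEN conjunct2, THEN conjunct2, THEN conjunct2, THEN conjunct1]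
lemmas GF = G[unfolded G_framework_def, THEN conjunct2, THEN conjunct2, THEN conjunct2, THEN conjunct2, THEN conjunct2, THEN conjunct1]
lemmas GH = G[unfolded G_framework_def, THEN conjunct2, THEN conjunct2, THEN conjunct2, THEN conjunct2, THEN conjunct2, THEN conjunct2]
lemmas GAT = bspec[OF GA TT]

lemma LG_const: "(\<lambda>_. c) \<in> LG T" using GAT by blast
lemma LG_add: "X \<in> LG T \<Longrightarrow> Y \<in> LG T \<Longrightarrow> (\<lambda>w. X w + Y w) \<in> LG T"
  using GAT by blast
lemma LG_scale: "X \<in> LG T \<Longrightarrow> (\<lambda>w. a * X w) \<in> LG T"
  using GAT by blast
lemma LG_abs: "X \<in> LG T \<Longrightarrow> (\<lambda>w. \<bar>X w\<bar>) \<in> LG T"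
  using GAT by blast
lemma LG_sub: "0 \<le> s \<Longrightarrow> s \<le> T \<Longrightarrow> LG s \<subseteq> LG T"
  using G unfolding G_framework_def by blast
lemma E_mono: "X \<in> LG T \<Longrightarrow> Y \<in> LG T \<Longrightarrow> (\<And>w. X w \<le> Y w) \<Longrightarrow> E X \<le> E Y"
  using GC by blast
lemma E_const: "E (\<lambda>_. c) = c"
  using GD by blast
lemma E_subadd: "X \<in> LG T \<Longrightarrow> Y \<in> LG T \<Longrightarrow> E (\<lambda>w. X w + Y w) \<le> E X + E Y"
  using GE by blast
lemma E_homog: "X \<in> LG T \<Longrightarrow> 0 \<le> a \<Longrightarrow> E (\<lambda>w. a * X w) = a * E X"
  using GF by blast
lemma LG_comp: "Y \<in> LG T \<Longrightarrow> (\<And>y. (\<lambda>w. f w y) \<in> LG T) \<Longrightarrow> (\<And>w y y'. \<bar>f w y - f w y'\<bar> \<le> K * \<bar>y - y'\<bar>)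
   \<Longrightarrow> (\<lambda>w. f w (Y w)) \<in> LG T"
proof -
  assume a: "Y \<in> LG T" "\<And>y. (\<lambda>w. f w y) \<in> LG T" "\<And>w y y'. \<bar>f w y - f w y'\<bar> \<le> K * \<bar>y - y'\<bar>"
  have "\<forall>f :: 'w \<Rightarrow> real \<Rightarrow> real. \<forall>Y\<in>LG T.
        (\<forall>y. (\<lambda>w. f w y) \<in> LG T) \<and> (\<exists>K. \<forall>w y y'. \<bar>f w y - f w y'\<bar> \<le> K * \<bar>y - y'\<bar>)
        \<longrightarrow> (\<lambda>w. f w (Y w)) \<in> LG T" using GH by blast
  then show ?thesis using a by blast
qed

lemma LG_diff: "X \<in> LG T \<Longrightarrow> Y \<in> LG T \<Longrightarrow> (\<lambda>w. X w - Y w) \<in> LG T"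
  using LG_add[OF _ LG_scale[of Y "-1"], of X] by simp

lemma E_transl: assumes "X \<in> LG T" shows "E (\<lambda>w. X w + c) = E X + c"
proof -
  have m: "(\<lambda>w. X w + c) \<in> LG T" using LG_add[OF assms LG_const] .
  have 1: "E (\<lambda>w. X w + c) \<le> E X + c" using E_subadd[OF assms LG_const, of c] E_const by simp
  have "E X = E (\<lambda>w. (X w + c) + (- c))" by simp
  also have "\<dots> \<le> E (\<lambda>w. X w + c) + (- c)" using E_subadd[OF m LG_const, of "-c"] E_const by simp
  finally show ?thesis using 1 by simp
qed

lemma E_diff_le: assumes "X \<in> LG T" "Y \<in> LG T" shows "E X - E Y \<le> E (\<lambda>w. X w - Y w)"
proof -
  have "E X = E (\<lambda>w. (X w - Y w) + Y w)" by simp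
  also have "\<dots> \<le> E (\<lambda>w. X w - Y w) + E Y" using E_subadd[OF LG_diff[OF assms] assms(2)] .
  finally show ?thesis by simp
qed

lemma E_bound2: assumes "X \<in> LG T" "Y \<in> LG T" "Z \<in> LG T" "0 \<le> a"
  and b: "\<And>w. \<bar>X w - Y w\<bar> \<le> a * Z w + b"
  shows "\<bar>E X - E Y\<bar> \<le> a * E Z + b"
proof -
  have mz: "(\<lambda>w. a * Z w + b) \<in> LG T" using LG_add[OF LG_scale[OF assms(3)] LG_const] .
  have ez: "E (\<lambda>w. a * Z w + b) = a * E Z + b"
    using E_transl[OF LG_scale[OF assms(3)], of a b] E_homog[OF assms(3,4)] by simp
  have "E X - E Y \<le> E (\<lambda>w. X w - Y w)" using E_diff_le[OF assms(1,2)] .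
  also have "\<dots> \<le> E (\<lambda>w. a * Z w + b)" apply (rule E_mono[OF LG_diff[OF assms(1,2)] mz])
    using b by (metis abs_le_D1)
  finally have 1: "E X - E Y \<le> a * E Z + b" using ez by simp
  have "E Y - E X \<le> E (\<lambda>w. Y w - X w)" using E_diff_le[OF assms(2,1)] .
  also have "\<dots> \<le> E (\<lambda>w. a * Z w + b)" apply (rule E_mono[OF LG_diff[OF assms(2,1)] mz])
    using b by (metis abs_le_D1 abs_minus_commute)
  finally have 2: "E Y - E X \<le> a * E Z + b" using ez by simp
  show ?thesis using 1 2 by linarith
qed

lemma E_bound: assumes "X \<in> LG T" "Y \<in> LG T" "\<And>w. \<bar>X w - Y w\<bar> \<le> b"
  shows "\<bar>E X - E Y\<bar> \<le> b"
proof -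
  have "\<bar>E X - E Y\<bar> \<le> 0 * E (\<lambda>_. 0) + b"
    by (rule E_bound2[OF assms(1,2) LG_const]) (use assms(3) in simp_all)
  then show ?thesis by simp
qed

lemma hb_lip: "t \<in> {0..T} \<Longrightarrow> \<bar>hb t y w - hb t y' w\<bar> \<le> c_hi * \<bar>y - y'\<bar>"
  using h_bilip by blast

lemma hb_low: assumes "t \<in> {0..T}" "y \<le> y'" shows "hb t y w + c_lo * (y' - y) \<le> hb t y' w"
proof -
  have "strict_mono (\<lambda>y. hb t y w)" using h_mono assms(1) by blast
  then have "hb t y w \<le> hb t y' w" using assms(2) strict_mono_less_eq[of "\<lambda>y. hb t y w" y y'] by simp
  moreover have "c_lo * \<bar>y' - y\<bar> \<le> \<bar>hb t y' w - hb t y w\<bar>" using h_bilip assms(1) by blast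
  ultimately show ?thesis using assms(2) by simp
qed

lemma Hb_mem: assumes "t \<in> {0..T}" "X \<in> LG T"
  shows "(\<lambda>w. hb t (x + X w - e) w) \<in> LG T"
proof -
  have "(\<lambda>w. (\<lambda>w y. hb t (x + y - e) w) w (X w)) \<in> LG T"
  proof (rule LG_comp[OF assms(2), where K = c_hi])
    fix y show "(\<lambda>w. hb t (x + y - e) w) \<in> LG T" using h_LG assms(1) by blast
  next
    fix w y y'
    show "\<bar>hb t (x + y - e) w - hb t (x + y' - e) w\<bar> \<le> c_hi * \<bar>y - y'\<bar>"
      using hb_lip[OF assms(1), of "x + y - e" w "x + y' - e"] by simp
  qed
  then show ?thesis by simp
qed

end

context GS begin

lemma Hbar_low: assumes "t \<in> {0..T}" "X \<in> LG T" "x \<le> x'"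
  shows "Hbar E hb t x X + c_lo * (x' - x) \<le> Hbar E hb t x' X"
proof -
  have "Hbar E hb t x X + c_lo * (x' - x) = E (\<lambda>w. hb t (x + X w - E X) w + c_lo * (x' - x))"
    unfolding Hbar_def using E_transl[OF Hb_mem[OF assms(1,2)]] by simp
  also have "\<dots> \<le> Hbar E hb t x' X" unfolding Hbar_def
  proof (rule E_mono)
    show "(\<lambda>w. hb t (x + X w - E X) w + c_lo * (x' - x)) \<in> LG T"
      using LG_add[OF Hb_mem[OF assms(1,2)] LG_const] .
    show "(\<lambda>w. hb t (x' + X w - E X) w) \<in> LG T" using Hb_mem[OF assms(1,2)] .
    fix w show "hb t (x + X w - E X) w + c_lo * (x' - x) \<le> hb t (x' + X w - E X) w"
      using hb_low[OF assms(1), of "x + X w - E X" "x' + X w - E X" w] assms(3) by simp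
  qed
  finally show ?thesis .
qed

lemma Hbar_lip: assumes "t \<in> {0..T}" "X \<in> LG T"
  shows "\<bar>Hbar E hb t x X - Hbar E hb t x' X\<bar> \<le> c_hi * \<bar>x - x'\<bar>"
  unfolding Hbar_def
  apply (rule E_bound[OF Hb_mem[OF assms] Hb_mem[OF assms]])
  subgoal for w using hb_lip[OF assms(1), of "x + X w - E X" w "x' + X w - E X"] by simp
  done

lemma Hbar_sep: assumes "t \<in> {0..T}" "X \<in> LG T"
  shows "c_lo * \<bar>x - x'\<bar> \<le> \<bar>Hbar E hb t x X - Hbar E hb t x' X\<bar>"
proof (cases "x \<le> x'")
  case True then show ?thesis using Hbar_low[OF assms True] by simp
next
  case False then show ?thesis using Hbar_low[OF assms, of x' x] by simp
qed

lemma Hbar_cont: assumes "t \<in> {0..T}" "X \<in> LG T"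
  shows "continuous_on A (\<lambda>x. Hbar E hb t x X)"
  unfolding continuous_on_iff
proof (intro ballI allI impI)
  fix x and e :: real assume "e > 0"
  have ch: "c_hi > 0" using c_pos by simp
  show "\<exists>d>0. \<forall>x'\<in>A. dist x' x < d \<longrightarrow> dist (Hbar E hb t x' X) (Hbar E hb t x X) < e"
  proof (intro exI[of _ "e / c_hi"] conjI ballI impI)
    show "e / c_hi > 0" using \<open>e > 0\<close> ch by simp
    fix x' assume "dist x' x < e / c_hi"
    then have "c_hi * \<bar>x' - x\<bar> < e" using ch by (simp add: dist_real_def field_simps)
    then show "dist (Hbar E hb t x' X) (Hbar E hb t x X) < e"
      using Hbar_lip[OF assms, of x' x] by (simp add: dist_real_def)
  qed
qed

lemma Hbar_ex1: assumes "t \<in> {0..T}" "X \<in> LG T"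
  shows "\<exists>!x. Hbar E hb t x X = a"
proof (rule ex_ex1I)
  define h0 where "h0 = Hbar E hb t 0 X"
  define r where "r = \<bar>a - h0\<bar> / c_lo"
  have r0: "r \<ge> 0" unfolding r_def using c_pos by simp
  have "Hbar E hb t (-r) X + c_lo * (0 - (-r)) \<le> h0" unfolding h0_def
    using Hbar_low[OF assms, of "-r" 0] r0 by simp
  then have 1: "Hbar E hb t (-r) X \<le> a" unfolding r_def using c_pos by simp
  have "h0 + c_lo * (r - 0) \<le> Hbar E hb t r X" unfolding h0_def
    using Hbar_low[OF assms, of 0 r] r0 by simp
  then have 2: "a \<le> Hbar E hb t r X" unfolding r_def using c_pos by simp
  show "\<exists>x. Hbar E hb t x X = a"
    using IVT'[of "\<lambda>x. Hbar E hb t x X" "-r" a r, OF 1 2 _ Hbar_cont[OF assms]] r0 by auto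
next
  fix x y assume "Hbar E hb t x X = a" "Hbar E hb t y X = a"
  then show "x = y" using Hbar_sep[OF assms, of x y] c_pos by (smt (verit) mult_pos_pos)
qed

lemma Hinv_eq: assumes "t \<in> {0..T}" "X \<in> LG T"
  shows "Hbar E hb t (Hinv E hb t X a) X = a"
  unfolding Hinv_def by (rule theI'[OF Hbar_ex1[OF assms]])

lemma E_absdiff: assumes "X \<in> LG T" "Y \<in> LG T"
  shows "\<bar>E X - E Y\<bar> \<le> E (\<lambda>w. \<bar>X w - Y w\<bar>)"
  using E_bound2[OF assms LG_abs[OF LG_diff[OF assms]], of 1 0] by simp

lemma key: assumes t: "t \<in> {0..T}" and s: "s \<in> {0..T}" and X: "X \<in> LG T" and Y: "Y \<in> LG T"
  and K: "\<And>y w. \<bar>hb t y w - hb s y w\<bar> \<le> K"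
  shows "c_lo * \<bar>Hinv E hb t X a - Hinv E hb s Y b\<bar> \<le> \<bar>a - b\<bar> + K + 2 * c_hi * E (\<lambda>w. \<bar>X w - Y w\<bar>)"
proof -
  define x where "x = Hinv E hb t X a"
  define y where "y = Hinv E hb s Y b"
  define D where "D = E (\<lambda>w. \<bar>X w - Y w\<bar>)"
  have hx: "Hbar E hb t x X = a" unfolding x_def by (rule Hinv_eq[OF t X])
  have hy: "Hbar E hb s y Y = b" unfolding y_def by (rule Hinv_eq[OF s Y])
  have dE: "\<bar>E X - E Y\<bar> \<le> D" unfolding D_def by (rule E_absdiff[OF X Y])
  have c0: "c_hi \<ge> 0" using c_pos by simp
  have A: "\<bar>Hbar E hb s y X - Hbar E hb s y Y\<bar> \<le> c_hi * D + c_hi * D"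
    unfolding Hbar_def D_def
  proof (rule E_bound2[OF Hb_mem[OF s X] Hb_mem[OF s Y] LG_abs[OF LG_diff[OF X Y]] c0])
    fix w
    have "\<bar>hb s (y + X w - E X) w - hb s (y + Y w - E Y) w\<bar> \<le> c_hi * \<bar>(y + X w - E X) - (y + Y w - E Y)\<bar>"
      by (rule hb_lip[OF s])
    also have "\<dots> \<le> c_hi * (\<bar>X w - Y w\<bar> + D)"
      apply (rule mult_left_mono[OF _ c0]) using dE by linarith
    finally show "\<bar>hb s (y + X w - E X) w - hb s (y + Y w - E Y) w\<bar> \<le> c_hi * \<bar>X w - Y w\<bar> + c_hi * E (\<lambda>w. \<bar>X w - Y w\<bar>)"
      by (simp add: algebra_simps D_def)
  qed
  have B: "\<bar>Hbar E hb t y X - Hbar E hb s y X\<bar> \<le> K"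
    unfolding Hbar_def by (rule E_bound[OF Hb_mem[OF t X] Hb_mem[OF s X]]) (use K in simp)
  have "c_lo * \<bar>x - y\<bar> \<le> \<bar>Hbar E hb t x X - Hbar E hb t y X\<bar>" by (rule Hbar_sep[OF t X])
  also have "\<dots> \<le> \<bar>a - b\<bar> + K + 2 * c_hi * D" using A B hx hy by linarith
  finally show ?thesis unfolding x_def y_def D_def .
qed

end

context GS begin

lemma cont_gen:
  assumes a_cont: "continuous_on {0..T} a"
    and S: "\<And>t. t \<in> {0..T} \<Longrightarrow> S t \<in> LG T"
    and St: "\<And>v. v \<in> {0..T} \<Longrightarrow> ((\<lambda>v'. E (\<lambda>w. \<bar>S v' w - S v w\<bar>)) \<longlongrightarrow> 0) (at v within {0..T})"
    and h_ucont: "\<forall>\<epsilon>>0. \<exists>\<delta>>0. \<forall>w. \<forall>t\<in>{0..T}. \<forall>t'\<in>{0..T}. \<forall>y y'.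
                    \<bar>t - t'\<bar> < \<delta> \<and> \<bar>y - y'\<bar> < \<delta> \<longrightarrow> \<bar>hb t y w - hb t' y' w\<bar> < \<epsilon>"
  shows "continuous_on {0..T} (\<lambda>t. Hinv E hb t (S t) (a t))"
  unfolding continuous_on_iff
proof (intro ballI allI impI)
  fix s and e :: real assume s: "s \<in> {0..T}" and e: "e > 0"
  define \<epsilon> where "\<epsilon> = e * c_lo / 4"
  have ep: "\<epsilon> > 0" unfolding \<epsilon>_def using e c_pos by simp
  have ch: "c_hi > 0" using c_pos by simp
  obtain d1 where d1: "d1 > 0" "\<And>t. t \<in> {0..T} \<Longrightarrow> dist t s < d1 \<Longrightarrow> dist (a t) (a s) < \<epsilon>"
    using a_cont s ep unfolding continuous_on_iff by metis
  obtain d2 where d2: "d2 > 0" "\<And>w t t' y y'. t\<in>{0..T} \<Longrightarrow> t'\<in>{0..T} \<Longrightarrow>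
                    \<bar>t - t'\<bar> < d2 \<Longrightarrow> \<bar>y - y'\<bar> < d2 \<Longrightarrow> \<bar>hb t y w - hb t' y' w\<bar> < \<epsilon>"
    using h_ucont ep by metis
  have "\<forall>\<^sub>F v' in at s within {0..T}. dist (E (\<lambda>w. \<bar>S v' w - S s w\<bar>)) 0 < \<epsilon> / c_hi"
    using St[OF s] ep ch unfolding tendsto_iff by simp
  then obtain d3 where d3: "d3 > 0" "\<And>t. t \<in> {0..T} \<Longrightarrow> t \<noteq> s \<Longrightarrow> dist t s < d3 \<Longrightarrow>
      dist (E (\<lambda>w. \<bar>S t w - S s w\<bar>)) 0 < \<epsilon> / c_hi"
    unfolding eventually_at by metis
  show "\<exists>d>0. \<forall>t\<in>{0..T}. dist t s < d \<longrightarrow> dist (Hinv E hb t (S t) (a t)) (Hinv E hb s (S s) (a s)) < e"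
  proof (intro exI[of _ "min d1 (min d2 d3)"] conjI ballI impI)
    show "min d1 (min d2 d3) > 0" using d1 d2 d3 by simp
    fix t assume t: "t \<in> {0..T}" and dt: "dist t s < min d1 (min d2 d3)"
    show "dist (Hinv E hb t (S t) (a t)) (Hinv E hb s (S s) (a s)) < e"
    proof (cases "t = s")
      case True then show ?thesis using e by simp
    next
      case False
      have K: "\<bar>hb t y w - hb s y w\<bar> \<le> \<epsilon>" for y w
        using d2(2)[OF t s, of y y w] dt d2(1) by (simp add: dist_real_def)
      have k: "c_lo * \<bar>Hinv E hb t (S t) (a t) - Hinv E hb s (S s) (a s)\<bar>
          \<le> \<bar>a t - a s\<bar> + \<epsilon> + 2 * c_hi * E (\<lambda>w. \<bar>S t w - S s w\<bar>)"
        by (rule key[OF t s S[OF t] S[OF s] K])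
      have f1: "\<bar>a t - a s\<bar> < \<epsilon>" using d1(2)[OF t] dt by (simp add: dist_real_def)
      have "\<bar>E (\<lambda>w. \<bar>S t w - S s w\<bar>)\<bar> < \<epsilon> / c_hi"
        using d3(2)[OF t False] dt by (simp add: dist_real_def)
      then have f2: "c_hi * E (\<lambda>w. \<bar>S t w - S s w\<bar>) < \<epsilon>"
        using ch by (simp add: field_simps) (smt (verit) abs_ge_self mult_left_mono)
      have "c_lo * \<bar>Hinv E hb t (S t) (a t) - Hinv E hb s (S s) (a s)\<bar> < c_lo * e"
      proof -
        have f3: "c_lo * e = 4 * \<epsilon>" unfolding \<epsilon>_def by simp
        have f4: "2 * c_hi * E (\<lambda>w. \<bar>S t w - S s w\<bar>) = 2 * (c_hi * E (\<lambda>w. \<bar>S t w - S s w\<bar>))" by simp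
        show ?thesis using k f1 f2 f3 f4 by linarith
      qed
      then show ?thesis using c_pos by (simp add: dist_real_def)
    qed
  qed
qed

end

theorem proposition3p6:
  fixes E :: "('w \<Rightarrow> real) \<Rightarrow> real"
    and LG :: "real \<Rightarrow> ('w \<Rightarrow> real) set"
    and T :: real
    and l u :: "real \<Rightarrow> real"
    and hb :: "real \<Rightarrow> real \<Rightarrow> 'w \<Rightarrow> real"
    and C_h c_lo c_hi :: real
  assumes G: "G_framework E LG T"
    and l_cont: "continuous_on {0..T} l" and u_cont: "continuous_on {0..T} u"
    and l_bdd: "bounded (l ` {0..T})" and u_bdd: "bounded (u ` {0..T})"
    and gap: "\<exists>\<delta>>0. \<forall>t\<in>{0..T}. u t - l t \<ge> \<delta>"
    and h_ucont: "\<forall>\<epsilon>>0. \<exists>\<delta>>0. \<forall>w. \<forall>t\<in>{0..T}. \<forall>t'\<in>{0..T}. \<forall>y y'.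
                    \<bar>t - t'\<bar> < \<delta> \<and> \<bar>y - y'\<bar> < \<delta> \<longrightarrow> \<bar>hb t y w - hb t' y' w\<bar> < \<epsilon>"
    and h_mono: "\<forall>t\<in>{0..T}. \<forall>w. strict_mono (\<lambda>y. hb t y w)"
    and h_LG: "\<forall>t\<in>{0..T}. \<forall>y. hb t y \<in> LG T"
    and C_h_pos: "C_h > 0"
    and h_growth: "\<forall>t\<in>{0..T}. \<forall>y w. \<bar>hb t y w\<bar> \<le> C_h * (1 + \<bar>y\<bar>)"
    and c_pos: "0 < c_lo" "c_lo \<le> c_hi"
    and h_bilip: "\<forall>t\<in>{0..T}. \<forall>y y' w. c_lo * \<bar>y - y'\<bar> \<le> \<bar>hb t y w - hb t y' w\<bar>
                    \<and> \<bar>hb t y w - hb t y' w\<bar> \<le> c_hi * \<bar>y - y'\<bar>"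
  shows "(\<forall>S\<in>CG1 E LG T.
            continuous_on {0..T} (\<lambda>t. Hinv E hb t (S t) (l t))
          \<and> continuous_on {0..T} (\<lambda>t. Hinv E hb t (S t) (u t)))
       \<and> continuous_on {0..T} (\<lambda>t. Hinv E hb t (\<lambda>_. 0) (l t))
       \<and> continuous_on {0..T} (\<lambda>t. Hinv E hb t (\<lambda>_. 0) (u t))
       \<and> bounded ((\<lambda>t. Hinv E hb t (\<lambda>_. 0) (l t)) ` {0..T})
       \<and> bounded ((\<lambda>t. Hinv E hb t (\<lambda>_. 0) (u t)) ` {0..T})
       \<and> (\<forall>t\<in>{0..T}. \<forall>X\<in>LG t. \<forall>X'\<in>LG t.
            \<bar>Hinv E hb t X (l t) - Hinv E hb t X' (l t)\<bar> \<le> 2 * c_hi / c_lo * E (\<lambda>w. \<bar>X w - X' w\<bar>)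
          \<and> \<bar>Hinv E hb t X (u t) - Hinv E hb t X' (u t)\<bar> \<le> 2 * c_hi / c_lo * E (\<lambda>w. \<bar>X w - X' w\<bar>))"
proof (cases "0 \<le> T")
  case False
  then have "{0..T} = ({} :: real set)" by simp
  then show ?thesis by simp
next
  case True
  interpret GS E LG T hb c_lo c_hi
    using G True c_pos h_mono h_LG h_bilip by unfold_locales auto
  have P1: "continuous_on {0..T} (\<lambda>t. Hinv E hb t (S t) (a t))"
    if S: "S \<in> CG1 E LG T" and a: "continuous_on {0..T} a" for S a
  proof (rule cont_gen[OF a _ _ h_ucont])
    fix t assume t: "t \<in> {0..T}"
    then have "S t \<in> LG t" using S unfolding CG1_def by blast
    then show "S t \<in> LG T" using LG_sub[of t] t by auto
  next
    fix v assume "v \<in> {0..T}"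
    then show "((\<lambda>v'. E (\<lambda>w. \<bar>S v' w - S v w\<bar>)) \<longlongrightarrow> 0) (at v within {0..T})"
      using S unfolding CG1_def by blast
  qed
  have P0: "continuous_on {0..T} (\<lambda>t. Hinv E hb t (\<lambda>_. 0) (a t))"
    if a: "continuous_on {0..T} a" for a
    using cont_gen[OF a _ _ h_ucont, of "\<lambda>_ _. 0"] LG_const E_const by simp
  have B: "bounded ((\<lambda>t. Hinv E hb t (\<lambda>_. 0) (a t)) ` {0..T})"
    if a: "continuous_on {0..T} a" for a
    by (rule compact_imp_bounded[OF compact_continuous_image[OF P0[OF a]]]) simp
  have L: "\<bar>Hinv E hb t X a - Hinv E hb t X' a\<bar> \<le> 2 * c_hi / c_lo * E (\<lambda>w. \<bar>X w - X' w\<bar>)"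
    if t: "t \<in> {0..T}" and X: "X \<in> LG t" and X': "X' \<in> LG t" for t X X' a
  proof -
    have XT: "X \<in> LG T" "X' \<in> LG T" using X X' LG_sub[of t] t by auto
    have "c_lo * \<bar>Hinv E hb t X a - Hinv E hb t X' a\<bar> \<le> \<bar>a - a\<bar> + 0 + 2 * c_hi * E (\<lambda>w. \<bar>X w - X' w\<bar>)"
      by (rule key[OF t t XT]) simp
    then show ?thesis using c_pos by (simp add: field_simps)
  qed
  show ?thesis using P1 P0 B L l_cont u_cont by blast
qed

end
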